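(* Consider the Best-or-Worst secretary problem with $n$ candidates and unequal payoffs $0\le m<M$: selecting the overall worst candidate pays $m$, selecting the overall best candidate pays $M$, and any other outcome (including selecting nobody) pays $0$. Then there exist integers $0\le r(n)\le s(n)\le n$ such that the following strategy maximizes the expected payoff among all strategies: reject the first $r(n)$ interviewed candidates; for the interviews $k$ with $r(n)<k\le s(n)$, accept the first candidate which is better than all the preceding ones; after the $s(n)$-th interview, accept the first candidate which is either better than all the preceding ones or worse than all the preceding ones.
   Context: Setting (secretary-type problem): $n$ candidates have distinct qualities (a strict total order) and are interviewed one at a time in uniformly random order (all $n!$ orders equally likely). After the $k$-th interview, the interviewer knows only the relative ranks of the first $k$ candidates among themselves and must immediately and irrevocably either accept the $k$-th candidate (stopping the process) or reject it; rejected candidates cannot be recalled. A strategy is a rule making this decision at each step using only the relative ranks observed so far (it may accept nobody). *)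

theory Defs
  imports Complex_Main
begin

text \<open>An interview order of n candidates: a list xs that is a permutation of {0..<n};
  xs ! i is the (absolute) quality of the candidate interviewed at step i+1
  (0 = overall worst, n-1 = overall best).\<close>
definition orders :: "nat \<Rightarrow> nat list set" where
  "orders n = {xs. distinct xs \<and> set xs = {0..<n}}"

text \<open>What the interviewer observes after the k-th interview: the relative ranks of the
  first k candidates among themselves (entry i = number of the first k candidates worse
  than the i-th one).\<close>
definition obs :: "nat list \<Rightarrow> nat \<Rightarrow> nat list" where
  "obs xs k = map (\<lambda>i. card {j. j < k \<and> xs ! j < xs ! i}) [0..<k]"

text \<open>A strategy maps the observation after the k-th interview (a list of length k) to the
  decision whether to accept the k-th candidate.  The step at which it stops (if any):\<close>
definition stop_time :: "nat \<Rightarrow> (nat list \<Rightarrow> bool) \<Rightarrow> nat list \<Rightarrow> nat option" where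
  "stop_time n S xs =
     (if \<exists>k\<in>{1..n}. S (obs xs k) then Some (LEAST k. k \<in> {1..n} \<and> S (obs xs k)) else None)"

definition payoff :: "nat \<Rightarrow> real \<Rightarrow> real \<Rightarrow> (nat list \<Rightarrow> bool) \<Rightarrow> nat list \<Rightarrow> real" where
  "payoff n m M S xs =
     (case stop_time n S xs of
        None \<Rightarrow> 0
      | Some k \<Rightarrow> (if xs ! (k - 1) = n - 1 then M else if xs ! (k - 1) = 0 then m else 0))"

definition expected_payoff :: "nat \<Rightarrow> real \<Rightarrow> real \<Rightarrow> (nat list \<Rightarrow> bool) \<Rightarrow> real" where
  "expected_payoff n m M S = (\<Sum>xs\<in>orders n. payoff n m M S xs) / real (card (orders n))"

definition threshold_strategy :: "nat \<Rightarrow> nat \<Rightarrow> nat list \<Rightarrow> bool" where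
  "threshold_strategy r s ob =
     (let k = length ob in
      if k \<le> r then False
      else if k \<le> s then last ob = k - 1
      else (last ob = k - 1 \<or> last ob = 0))"

end

theory Submission
  imports Defs
begin

definition sh :: "nat \<Rightarrow> nat \<Rightarrow> nat" where
  "sh a x = (if a \<le> x then Suc x else x)"

definition extd :: "nat list \<Rightarrow> nat \<Rightarrow> nat list" where
  "extd xs a = map (sh a) xs @ [a]"

lemma sh_less[simp]: "(sh a x < sh a y) = (x < y)"
  by (auto simp: sh_def)

lemma sh_inj: "sh a x = sh a y \<Longrightarrow> x = y"
  by (auto simp: sh_def split: if_splits)

lemma length_extd[simp]: "length (extd xs a) = Suc (length xs)"
  by (simp add: extd_def)

lemma nth_extd_lt: "i < length xs \<Longrightarrow> extd xs a ! i = sh a (xs ! i)"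
  by (simp add: extd_def nth_append)

lemma nth_extd_last: "extd xs a ! length xs = a"
  by (simp add: extd_def nth_append)

lemma obs_extd:
  assumes "i \<le> length p" shows "obs (extd p a) i = obs p i"
proof -
  have e: "\<And>j. j < i \<Longrightarrow> extd p a ! j = sh a (p ! j)"
    using assms by (simp add: nth_extd_lt)
  have "\<And>i'. i' < i \<Longrightarrow> {j. j < i \<and> extd p a ! j < extd p a ! i'} = {j. j < i \<and> p ! j < p ! i'}"
    using e by auto
  then show ?thesis unfolding obs_def by (intro map_cong) auto
qed

lemma extd_orders:
  assumes "xs \<in> orders n" "a \<le> n" shows "extd xs a \<in> orders (Suc n)"
proof -
  have d: "distinct xs" and s: "set xs = {0..<n}" using assms by (auto simp: orders_def)
  have "inj (sh a)" by (auto intro: injI sh_inj)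
  then have "distinct (map (sh a) xs)" using d by (simp add: distinct_map inj_on_def)
  moreover have "a \<notin> set (map (sh a) xs)" by (auto simp: sh_def split: if_splits)
  moreover have "set (map (sh a) xs) \<union> {a} = {0..<Suc n}"
  proof
    show "set (map (sh a) xs) \<union> {a} \<subseteq> {0..<Suc n}" using s assms(2) by (auto simp: sh_def)
  next
    show "{0..<Suc n} \<subseteq> set (map (sh a) xs) \<union> {a}"
    proof
      fix x assume x: "x \<in> {0..<Suc n}"
      show "x \<in> set (map (sh a) xs) \<union> {a}"
      proof (cases "x = a")
        case False
        show ?thesis
        proof (cases "x < a")
          case True
          then have "x = sh a x" "x \<in> set xs" using s assms(2) by (auto simp: sh_def)
          then show ?thesis by (metis UnI1 image_eqI set_map)
        next
          case False
          then have "x = sh a (x - 1)" "x - 1 \<in> set xs" using s x \<open>x \<noteq> a\<close> by (auto simp: sh_def)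
          then show ?thesis by (metis UnI1 image_eqI set_map)
        qed
      qed simp
    qed
  qed
  ultimately show ?thesis by (auto simp: orders_def extd_def)
qed

definition ush :: "nat \<Rightarrow> nat \<Rightarrow> nat" where
  "ush a x = (if a < x then x - 1 else x)"

lemma ush_inj: "ush a x = ush a y \<Longrightarrow> x \<noteq> a \<Longrightarrow> y \<noteq> a \<Longrightarrow> x = y"
  unfolding ush_def by (simp split: if_splits)

lemma ush_lt: "x < Suc n \<Longrightarrow> x \<noteq> a \<Longrightarrow> a \<le> n \<Longrightarrow> ush a x < n"
  unfolding ush_def by (simp; arith)

lemma orders_Suc: "orders (Suc n) = (\<lambda>(xs, a). extd xs a) ` (orders n \<times> {..n})"
proof
  show "(\<lambda>(xs, a). extd xs a) ` (orders n \<times> {..n}) \<subseteq> orders (Suc n)"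
    using extd_orders by auto
next
  show "orders (Suc n) \<subseteq> (\<lambda>(xs, a). extd xs a) ` (orders n \<times> {..n})"
  proof
    fix ys assume ys: "ys \<in> orders (Suc n)"
    then have d: "distinct ys" and s: "set ys = {0..<Suc n}" by (auto simp: orders_def)
    then have ne: "ys \<noteq> []" by auto
    define a where "a = last ys"
    define bl where "bl = butlast ys"
    have ys_eq: "ys = bl @ [a]" using ne by (simp add: a_def bl_def)
    have dbl: "distinct bl" and abl: "a \<notin> set bl" using d ys_eq by auto
    have sbl: "set bl = {0..<Suc n} - {a}" using s abl ys_eq by auto
    have "a \<in> set ys" using ys_eq by simp
    then have an: "a \<le> n" using s by auto
    define xs where "xs = map (ush a) bl"
    have "map (sh a) xs = bl"
      unfolding xs_def map_map
      by (rule map_idI) (use abl in \<open>auto simp: sh_def ush_def\<close>)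
    then have e: "extd xs a = ys" using ys_eq by (simp add: extd_def)
    have "inj_on (ush a) (set bl)" using abl by (metis inj_onI ush_inj)
    then have dx: "distinct xs" using dbl by (simp add: xs_def distinct_map)
    have sx: "set xs = {0..<n}"
    proof
      show "set xs \<subseteq> {0..<n}" using sbl an ush_lt unfolding xs_def by fastforce
    next
      show "{0..<n} \<subseteq> set xs"
      proof
        fix y assume y: "y \<in> {0..<n}"
        show "y \<in> set xs"
        proof (cases "y < a")
          case True
          then have "y = ush a y" "y \<in> set bl" using sbl y by (auto simp: ush_def)
          then show ?thesis unfolding xs_def by (metis image_eqI set_map)
        next
          case False
          then have "y = ush a (Suc y)" "Suc y \<in> set bl" using sbl y by (auto simp: ush_def)
          then show ?thesis unfolding xs_def by (metis image_eqI set_map)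
        qed
      qed
    qed
    have "xs \<in> orders n" using dx sx by (simp add: orders_def)
    then show "ys \<in> (\<lambda>(xs, a). extd xs a) ` (orders n \<times> {..n})"
      using e an by force
  qed
qed

lemma extd_inj_on: "inj_on (\<lambda>(xs, a). extd xs a) X"
proof (rule inj_onI, clarsimp)
  fix xs a ys b assume h: "extd xs a = extd ys b"
  then have ab: "a = b" by (metis extd_def last_snoc)
  have "map (sh a) xs = map (sh a) ys" using h ab by (simp add: extd_def)
  moreover have "inj (sh a)" by (auto intro: injI sh_inj)
  ultimately show "xs = ys \<and> a = b" using ab by (simp add: inj_map_eq_map)
qed

lemma sum_orders_Suc:
  "(\<Sum>ys\<in>orders (Suc n). f ys) = (\<Sum>xs\<in>orders n. \<Sum>a\<le>n. f (extd xs a))"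
proof -
  have "(\<Sum>ys\<in>orders (Suc n). f ys) = (\<Sum>p\<in>orders n \<times> {..n}. f ((\<lambda>(xs, a). extd xs a) p))"
    unfolding orders_Suc by (rule sum.reindex[OF extd_inj_on, unfolded comp_def])
  also have "\<dots> = (\<Sum>xs\<in>orders n. \<Sum>a\<le>n. f (extd xs a))"
    by (simp add: sum.cartesian_product split_def)
  finally show ?thesis .
qed

lemma card_less_orders:
  assumes "q \<in> orders L" "v \<le> L" shows "card {j. j < L \<and> q ! j < v} = v"
proof -
  have d: "distinct q" and s: "set q = {0..<L}" and l: "length q = L"
    using assms by (auto simp: orders_def distinct_card[symmetric])
  have "inj_on (nth q) {j. j < L \<and> q ! j < v}" using d l by (auto intro: inj_on_nth)
  then have "card {j. j < L \<and> q ! j < v} = card (nth q ` {j. j < L \<and> q ! j < v})"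
    by (simp add: card_image)
  also have "nth q ` {j. j < L \<and> q ! j < v} = {0..<v}"
  proof
    show "nth q ` {j. j < L \<and> q ! j < v} \<subseteq> {0..<v}" by auto
  next
    show "{0..<v} \<subseteq> nth q ` {j. j < L \<and> q ! j < v}"
    proof
      fix x assume "x \<in> {0..<v}"
      then have "x \<in> set q" using s assms(2) by auto
      then obtain j where "j < L" "q ! j = x" using l by (auto simp: in_set_conv_nth)
      then show "x \<in> nth q ` {j. j < L \<and> q ! j < v}" using \<open>x \<in> {0..<v}\<close> by auto
    qed
  qed
  finally show ?thesis by simp
qed


fun Fs :: "nat list \<Rightarrow> nat \<Rightarrow> (nat list \<Rightarrow> real) \<Rightarrow> real" where
  "Fs q 0 f = f q"
| "Fs q (Suc j) f = (\<Sum>a\<le>length q. Fs (extd q a) j f)"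

fun cmpl :: "nat list \<Rightarrow> nat \<Rightarrow> nat list set" where
  "cmpl q 0 = {q}"
| "cmpl q (Suc j) = (\<Union>a\<le>length q. cmpl (extd q a) j)"

lemma Fs_cong: "(\<And>ys. ys \<in> cmpl q j \<Longrightarrow> f ys = g ys) \<Longrightarrow> Fs q j f = Fs q j g"
  by (induction j arbitrary: q) (auto intro!: sum.cong)

lemma cmpl_obs: "ys \<in> cmpl q j \<Longrightarrow> i \<le> length q \<Longrightarrow> obs ys i = obs q i"
  by (induction j arbitrary: q) (auto simp: obs_extd)

lemma Fs_Suc': "Fs q (Suc j) f = Fs q j (\<lambda>ys. \<Sum>a\<le>length ys. f (extd ys a))"
proof (induction j arbitrary: q)
  case 0
  then show ?case by simp
next
  case (Suc j)
  have "Fs q (Suc (Suc j)) f = (\<Sum>a\<le>length q. Fs (extd q a) (Suc j) f)" by (rule Fs.simps(2))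
  also have "\<dots> = (\<Sum>a\<le>length q. Fs (extd q a) j (\<lambda>ys. \<Sum>a\<le>length ys. f (extd ys a)))"
    using Suc.IH by presburger
  also have "\<dots> = Fs q (Suc j) (\<lambda>ys. \<Sum>a\<le>length ys. f (extd ys a))" by (rule Fs.simps(2)[symmetric])
  finally show ?case .
qed

lemma sum_orders_Fs: "(\<Sum>ys\<in>orders n. f ys) = Fs [] n f"
proof (induction n arbitrary: f)
  case 0
  have "orders 0 = {[]}" by (auto simp: orders_def)
  then show ?case by simp
next
  case (Suc n)
  have "(\<Sum>ys\<in>orders (Suc n). f ys) = (\<Sum>xs\<in>orders n. \<Sum>a\<le>length xs. f (extd xs a))"
    unfolding sum_orders_Suc by (intro sum.cong) (auto simp: orders_def dest: distinct_card)
  also have "\<dots> = Fs [] (Suc n) f" by (simp only: Suc.IH Fs_Suc')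
  finally show ?case .
qed

definition gv :: "nat \<Rightarrow> real \<Rightarrow> real \<Rightarrow> nat \<Rightarrow> nat list \<Rightarrow> real" where
  "gv N m M L ys = (if ys ! (L - 1) = N - 1 then M else if ys ! (L - 1) = 0 then m else 0)"

fun vl :: "nat \<Rightarrow> real \<Rightarrow> real \<Rightarrow> (nat list \<Rightarrow> bool) \<Rightarrow> nat list \<Rightarrow> nat \<Rightarrow> real" where
  "vl N m M S p 0 = 0"
| "vl N m M S p (Suc j) = (\<Sum>a\<le>length p.
     if S (obs (extd p a) (Suc (length p))) then Fs (extd p a) j (gv N m M (Suc (length p)))
     else vl N m M S (extd p a) j)"

lemma cmpl_length: "ys \<in> cmpl q j \<Longrightarrow> length ys = length q + j"
  by (induction j arbitrary: q) auto

lemma vl_correct: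
  "length p = k \<Longrightarrow> k + j = N \<Longrightarrow> (\<forall>i. 1 \<le> i \<and> i \<le> k \<longrightarrow> \<not> S (obs p i)) \<Longrightarrow>
   Fs p j (payoff N m M S) = vl N m M S p j"
proof (induction j arbitrary: p k)
  case 0
  then have "stop_time N S p = None" by (auto simp: stop_time_def)
  then show ?case by (simp add: payoff_def)
next
  case (Suc j)
  show ?case
  proof (simp, intro sum.cong refl)
    fix a assume a: "a \<in> {..length p}"
    define q where "q = extd p a"
    have lq: "length q = Suc k" using Suc.prems by (simp add: q_def)
    have oq: "\<And>i. i \<le> k \<Longrightarrow> obs q i = obs p i" using Suc.prems by (simp add: q_def obs_extd)
    show "Fs (extd p a) j (payoff N m M S) =
      (if S (obs (extd p a) (Suc (length p))) then Fs (extd p a) j (gv N m M (Suc (length p)))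
       else vl N m M S (extd p a) j)"
    proof (cases "S (obs q (Suc k))")
      case True
      have "Fs q j (payoff N m M S) = Fs q j (gv N m M (Suc k))"
      proof (rule Fs_cong)
        fix ys assume ys: "ys \<in> cmpl q j"
        have oy: "\<And>i. i \<le> Suc k \<Longrightarrow> obs ys i = obs q i" using cmpl_obs[OF ys] lq by simp
        have ex: "\<exists>i\<in>{1..N}. S (obs ys i)" using True oy Suc.prems by (intro bexI[of _ "Suc k"]) auto
        have "(LEAST i. i \<in> {1..N} \<and> S (obs ys i)) = Suc k"
        proof (rule Least_equality)
          show "Suc k \<in> {1..N} \<and> S (obs ys (Suc k))" using True oy Suc.prems by auto
        next
          fix i assume "i \<in> {1..N} \<and> S (obs ys i)"
          then show "Suc k \<le> i" using oy oq Suc.prems(3) by (metis atLeastAtMost_iff not_less_eq_eq le_SucI)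
        qed
        then have "stop_time N S ys = Some (Suc k)" using ex by (simp add: stop_time_def)
        then show "payoff N m M S ys = gv N m M (Suc k) ys" by (simp add: payoff_def gv_def)
      qed
      then show ?thesis using True Suc.prems by (simp add: q_def)
    next
      case False
      have "Fs q j (payoff N m M S) = vl N m M S q j"
      proof (rule Suc.IH[OF lq])
        show "Suc k + j = N" using Suc.prems by simp
        show "\<forall>i. 1 \<le> i \<and> i \<le> Suc k \<longrightarrow> \<not> S (obs q i)"
          using False oq Suc.prems(3) by (metis le_Suc_eq)
      qed
      then show ?thesis using False Suc.prems by (simp add: q_def)
    qed
  qed
qed


lemma Fs_lin: "Fs q j (\<lambda>ys. c * f ys + d * g ys) = c * Fs q j f + d * Fs q j g"
  by (induction j arbitrary: q) (simp_all add: sum.distrib sum_distrib_left)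

lemma length_orders: "q \<in> orders L \<Longrightarrow> length q = L"
  by (auto simp: orders_def dest: distinct_card)

lemma nth_orders_lt: "q \<in> orders L \<Longrightarrow> i < L \<Longrightarrow> q ! i < L"
  using length_orders[of q L] by (auto simp: orders_def)

lemma sum_sh_best:
  assumes "x < Suc L'"
  shows "(\<Sum>a\<le>Suc L'. if sh a x = Suc L' then c else 0) = (if x = L' then real (Suc L') * c else 0)"
proof -
  have "(\<Sum>a\<le>Suc L'. if sh a x = Suc L' then c else 0) = (\<Sum>a\<le>Suc L'. if x = L' \<and> a \<le> L' then c else 0)"
    using assms by (intro sum.cong) (auto simp: sh_def)
  also have "\<dots> = (\<Sum>a\<le>L'. if x = L' then c else 0)" by simp
  also have "\<dots> = (if x = L' then real (Suc L') * c else 0)" by simp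
  finally show ?thesis .
qed

lemma sum_sh_worst:
  "(\<Sum>a\<le>Suc L'. if sh a x = 0 then c else 0) = (if x = 0 then real (Suc L') * c else 0)"
proof -
  have "(\<Sum>a\<le>Suc L'. if sh a x = 0 then c else 0) = (\<Sum>a\<le>Suc L'. if x = 0 \<and> 0 < a then c else 0)"
    by (intro sum.cong) (auto simp: sh_def)
  also have "\<dots> = (if x = 0 then c else 0) * 0 + (\<Sum>a\<le>L'. if x = 0 then c else 0)"
    by (subst sum.atMost_Suc_shift) simp
  also have "\<dots> = (if x = 0 then real (Suc L') * c else 0)" by simp
  finally show ?thesis .
qed

lemma Fs_best:
  "q \<in> orders L \<Longrightarrow> i < L \<Longrightarrow>
   Fs q j (\<lambda>ys. if ys ! i = L + j - 1 then 1 else 0) = (if q ! i = L - 1 then real (\<Prod>t\<in>{L..<L+j}. t) else 0)"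
proof (induction j arbitrary: q L)
  case 0
  then show ?case by simp
next
  case (Suc j)
  obtain L' where L: "L = Suc L'" using Suc.prems by (cases L) auto
  have lq: "length q = L" using Suc.prems length_orders by auto
  have x: "q ! i < Suc L'" using nth_orders_lt[OF Suc.prems] L by simp
  define c where "c = real (\<Prod>t\<in>{Suc L..<Suc L+j}. t)"
  have "Fs q (Suc j) (\<lambda>ys. if ys ! i = L + Suc j - 1 then 1 else 0)
      = (\<Sum>a\<le>L. Fs (extd q a) j (\<lambda>ys. if ys ! i = Suc L + j - 1 then 1 else 0))"
    using lq by simp
  also have "\<dots> = (\<Sum>a\<le>L. if sh a (q ! i) = L then c else 0)"
  proof (intro sum.cong refl)
    fix a assume "a \<in> {..L}"
    then have o: "extd q a \<in> orders (Suc L)" using extd_orders Suc.prems by auto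
    show "Fs (extd q a) j (\<lambda>ys. if ys ! i = Suc L + j - 1 then 1 else 0) = (if sh a (q ! i) = L then c else 0)"
      using Suc.IH[OF o] Suc.prems lq by (simp add: nth_extd_lt c_def)
  qed
  also have "\<dots> = (if q ! i = L' then real (Suc L') * c else 0)"
    unfolding L by (rule sum_sh_best[OF x])
  also have "\<dots> = (if q ! i = L - 1 then real (\<Prod>t\<in>{L..<L+Suc j}. t) else 0)"
  proof -
    have e: "(\<Prod>t\<in>{Suc L'..<Suc L'+Suc j}. t) = Suc L' * (\<Prod>t\<in>{Suc (Suc L')..<Suc (Suc L') + j}. t)"
      by (subst prod.atLeast_Suc_lessThan) auto
    show ?thesis unfolding c_def L using e by (simp only: of_nat_mult) simp
  qed
  finally show ?case .
qed

lemma Fs_worst: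
  "i < length q \<Longrightarrow>
   Fs q j (\<lambda>ys. if ys ! i = 0 then 1 else 0) = (if q ! i = 0 then real (\<Prod>t\<in>{length q..<length q+j}. t) else 0)"
proof (induction j arbitrary: q)
  case 0
  then show ?case by simp
next
  case (Suc j)
  define L where "L = length q"
  obtain L' where L: "L = Suc L'" using Suc.prems unfolding L_def by (cases "length q") auto
  define c where "c = real (\<Prod>t\<in>{Suc L..<Suc L+j}. t)"
  have "Fs q (Suc j) (\<lambda>ys. if ys ! i = 0 then 1 else 0)
      = (\<Sum>a\<le>L. Fs (extd q a) j (\<lambda>ys. if ys ! i = 0 then 1 else 0))"
    using L_def by simp
  also have "\<dots> = (\<Sum>a\<le>L. if sh a (q ! i) = 0 then c else 0)"
  proof (intro sum.cong refl)
    fix a assume "a \<in> {..L}"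
    show "Fs (extd q a) j (\<lambda>ys. if ys ! i = 0 then 1 else 0) = (if sh a (q ! i) = 0 then c else 0)"
      using Suc.IH[of "extd q a"] Suc.prems L_def by (simp add: nth_extd_lt c_def)
  qed
  also have "\<dots> = (if q ! i = 0 then real (Suc L') * c else 0)"
    unfolding L by (rule sum_sh_worst)
  also have "\<dots> = (if q ! i = 0 then real (\<Prod>t\<in>{length q..<length q+Suc j}. t) else 0)"
  proof -
    have e: "(\<Prod>t\<in>{Suc L'..<Suc L'+Suc j}. t) = Suc L' * (\<Prod>t\<in>{Suc (Suc L')..<Suc (Suc L') + j}. t)"
      by (subst prod.atLeast_Suc_lessThan) auto
    show ?thesis unfolding c_def L_def[symmetric] L using e by (simp only: of_nat_mult)
  qed
  finally show ?case .
qed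

definition PP :: "nat \<Rightarrow> nat \<Rightarrow> real" where
  "PP N L = real (\<Prod>t\<in>{L..<N}. t)"

definition imm :: "nat \<Rightarrow> real \<Rightarrow> real \<Rightarrow> nat \<Rightarrow> nat \<Rightarrow> real" where
  "imm N m M L a = PP N L * ((if a = L - 1 then M else 0) + (if a = 0 then m else 0))"

lemma immd:
  assumes "p \<in> orders k" "a \<le> k" "k + Suc j = N" "2 \<le> N"
  shows "Fs (extd p a) j (gv N m M (Suc k)) = imm N m M (Suc k) a"
proof -
  define q where "q = extd p a"
  have o: "q \<in> orders (Suc k)" using extd_orders assms by (simp add: q_def)
  have lq: "length q = Suc k" using o length_orders by auto
  have qk: "q ! k = a" using assms length_orders[OF assms(1)] nth_extd_last[of p a] by (simp add: q_def)
  have g: "gv N m M (Suc k) = (\<lambda>ys. M * (if ys ! k = k + j then 1 else 0) + m * (if ys ! k = 0 then 1 else 0))"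
    using assms by (auto simp: gv_def fun_eq_iff)
  have b: "Fs q j (\<lambda>ys. if ys ! k = k + j then 1 else 0) = (if a = k then PP N (Suc k) else 0)"
    using Fs_best[OF o, of k j] qk assms(3) by (simp add: PP_def)
  have w: "Fs q j (\<lambda>ys. if ys ! k = 0 then 1 else 0) = (if a = 0 then PP N (Suc k) else 0)"
    using Fs_worst[of k q j] qk lq assms(3) by (simp add: PP_def)
  have "Fs q j (gv N m M (Suc k)) = M * (if a = k then PP N (Suc k) else 0) + m * (if a = 0 then PP N (Suc k) else 0)"
    unfolding g Fs_lin b w ..
  also have "\<dots> = imm N m M (Suc k) a" by (simp add: imm_def algebra_simps)
  finally show ?thesis by (simp add: q_def)
qed


fun Vj :: "nat \<Rightarrow> real \<Rightarrow> real \<Rightarrow> nat \<Rightarrow> real" where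
  "Vj N m M 0 = 0"
| "Vj N m M (Suc j) = (\<Sum>a\<le>N - Suc j. max (imm N m M (N - j) a) (Vj N m M j))"

lemma vl_le_Vj:
  assumes "2 \<le> N"
  shows "p \<in> orders k \<Longrightarrow> k + j = N \<Longrightarrow> vl N m M S p j \<le> Vj N m M j"
proof (induction j arbitrary: p k)
  case 0
  then show ?case by simp
next
  case (Suc j)
  have lp: "length p = k" using Suc.prems length_orders by auto
  have "vl N m M S p (Suc j) = (\<Sum>a\<le>k.
     if S (obs (extd p a) (Suc k)) then Fs (extd p a) j (gv N m M (Suc k))
     else vl N m M S (extd p a) j)" by (simp only: vl.simps lp)
  also have "\<dots> \<le> (\<Sum>a\<le>k. max (imm N m M (Suc k) a) (Vj N m M j))"
  proof (intro sum_mono)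
    fix a assume a: "a \<in> {..k}"
    have o: "extd p a \<in> orders (Suc k)" using extd_orders Suc.prems a by auto
    show "(if S (obs (extd p a) (Suc k)) then Fs (extd p a) j (gv N m M (Suc k))
     else vl N m M S (extd p a) j) \<le> max (imm N m M (Suc k) a) (Vj N m M j)"
      using immd[OF Suc.prems(1) _ _ assms, of a j m M] Suc.IH[OF o] Suc.prems a by auto
  qed
  also have "\<dots> = Vj N m M (Suc j)"
  proof -
    have e1: "N - Suc j = k" and e2: "N - j = Suc k" using Suc.prems by auto
    show ?thesis by (simp only: Vj.simps e1 e2)
  qed
  finally show ?case .
qed

definition dec :: "nat \<Rightarrow> nat \<Rightarrow> nat \<Rightarrow> nat \<Rightarrow> bool" where
  "dec r s L a = (if L \<le> r then False else if L \<le> s then a = L - 1 else (a = L - 1 \<or> a = 0))"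

lemma thr_dec:
  assumes "q \<in> orders L" "1 \<le> L"
  shows "threshold_strategy r s (obs q L) = dec r s L (q ! (L - 1))"
proof -
  have l: "length (obs q L) = L" by (simp add: obs_def)
  have "last (obs q L) = card {j. j < L \<and> q ! j < q ! (L - 1)}"
    using assms(2) by (simp add: obs_def last_map)
  also have "\<dots> = q ! (L - 1)"
    using card_less_orders[OF assms(1)] nth_orders_lt[OF assms(1), of "L - 1"] assms(2) by simp
  finally show ?thesis using l by (simp add: threshold_strategy_def dec_def Let_def)
qed

lemma vl_thr:
  assumes "2 \<le> N"
    and D: "\<And>L a. 1 \<le> L \<Longrightarrow> L \<le> N \<Longrightarrow> a < L \<Longrightarrow>
        (dec r s L a \<longrightarrow> Vj N m M (N - L) \<le> imm N m M L a) \<and>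
        (\<not> dec r s L a \<longrightarrow> imm N m M L a \<le> Vj N m M (N - L))"
  shows "p \<in> orders k \<Longrightarrow> k + j = N \<Longrightarrow> vl N m M (threshold_strategy r s) p j = Vj N m M j"
proof (induction j arbitrary: p k)
  case 0
  then show ?case by simp
next
  case (Suc j)
  have lp: "length p = k" using Suc.prems length_orders by auto
  have "vl N m M (threshold_strategy r s) p (Suc j) = (\<Sum>a\<le>k.
     if threshold_strategy r s (obs (extd p a) (Suc k)) then Fs (extd p a) j (gv N m M (Suc k))
     else vl N m M (threshold_strategy r s) (extd p a) j)" by (simp only: vl.simps lp)
  also have "\<dots> = (\<Sum>a\<le>k. max (imm N m M (Suc k) a) (Vj N m M j))"
  proof (intro sum.cong refl)
    fix a assume a: "a \<in> {..k}"
    have o: "extd p a \<in> orders (Suc k)" using extd_orders Suc.prems a by auto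
    have t: "threshold_strategy r s (obs (extd p a) (Suc k)) = dec r s (Suc k) a"
      using thr_dec[OF o] nth_extd_last[of p a] lp by simp
    have nj: "N - Suc k = j" using Suc.prems by simp
    show "(if threshold_strategy r s (obs (extd p a) (Suc k)) then Fs (extd p a) j (gv N m M (Suc k))
     else vl N m M (threshold_strategy r s) (extd p a) j) = max (imm N m M (Suc k) a) (Vj N m M j)"
      using immd[OF Suc.prems(1) _ _ assms(1), of a j m M] Suc.IH[OF o] Suc.prems a t
        D[of "Suc k" a] nj by auto
  qed
  also have "\<dots> = Vj N m M (Suc j)"
  proof -
    have e1: "N - Suc j = k" and e2: "N - j = Suc k" using Suc.prems by auto
    show ?thesis by (simp only: Vj.simps e1 e2)
  qed
  finally show ?case .
qed

lemma Vj_nonneg: "0 \<le> m \<Longrightarrow> 0 \<le> M \<Longrightarrow> 0 \<le> Vj N m M j"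
proof (induction j)
  case 0
  then show ?case by simp
next
  case (Suc j)
  then show ?case by (auto intro!: sum_nonneg simp: max_def)
qed


lemma Vrec: "L < N \<Longrightarrow> Vj N m M (N - L) = (\<Sum>a\<le>L. max (imm N m M (Suc L) a) (Vj N m M (N - Suc L)))"
proof -
  assume L: "L < N"
  have e: "N - L = Suc (N - Suc L)" "N - Suc (N - Suc L) = L" "N - (N - Suc L) = Suc L" using L by auto
  show ?thesis by (simp only: e Vj.simps)
qed

lemma V4: "L < N \<Longrightarrow> real (Suc L) * Vj N m M (N - Suc L) \<le> Vj N m M (N - L)"
proof -
  assume L: "L < N"
  have "real (Suc L) * Vj N m M (N - Suc L) = (\<Sum>a\<le>L. Vj N m M (N - Suc L))" by simp
  also have "\<dots> \<le> (\<Sum>a\<le>L. max (imm N m M (Suc L) a) (Vj N m M (N - Suc L)))"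
    by (intro sum_mono) simp
  finally show ?thesis using Vrec[OF L] by simp
qed

lemma PP_N: "PP N N = 1" by (simp add: PP_def)

lemma PP_Suc: "L < N \<Longrightarrow> PP N L = real L * PP N (Suc L)"
  by (simp add: PP_def prod.atLeast_Suc_lessThan)

lemma PP_nonneg: "0 \<le> PP N L" unfolding PP_def by (rule of_nat_0_le_iff)

lemma up1:
  assumes "0 \<le> c" "1 \<le> L" "L < N" "Vj N m M (N - L) \<le> PP N L * c"
  shows "Vj N m M (N - Suc L) \<le> PP N (Suc L) * c"
proof -
  have pc: "0 \<le> PP N (Suc L) * c" using assms PP_nonneg by simp
  have "real (Suc L) * Vj N m M (N - Suc L) \<le> real L * (PP N (Suc L) * c)"
    using V4[OF assms(3), of m M] assms(4) PP_Suc[OF assms(3)] by simp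
  also have "\<dots> \<le> real (Suc L) * (PP N (Suc L) * c)"
    using pc by (intro mult_right_mono) auto
  finally show ?thesis by (simp del: of_nat_Suc)
qed

lemma upN:
  assumes "0 \<le> c" "1 \<le> L" "L \<le> L'" "L' \<le> N" "Vj N m M (N - L) \<le> PP N L * c"
  shows "Vj N m M (N - L') \<le> PP N L' * c"
  using assms(3,4)
proof (induction L' rule: dec_induct)
  case base
  then show ?case using assms(5) by simp
next
  case (step L')
  then show ?case using up1[OF assms(1), of L' N m M] assms(2) by simp
qed

lemma MM:
  assumes "2 \<le> N" "0 \<le> m" "m \<le> M"
  shows "L < N \<Longrightarrow> (M + m) * PP N (Suc L) \<le> Vj N m M (N - L)"
proof (induction "N - Suc L" arbitrary: L)
  case 0
  then have NL: "N = Suc L" by simp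
  have "(M + m) * PP N (Suc L) = (\<Sum>a\<le>L. imm N m M (Suc L) a)"
  proof -
    have L1: "L \<noteq> 0" using assms NL by simp
    have "(\<Sum>a\<le>L. imm N m M (Suc L) a) = (\<Sum>a\<le>L. (if a = L then M else 0) + (if a = 0 then m else 0))"
      by (simp add: imm_def NL PP_N)
    also have "\<dots> = M + m" by (simp add: sum.distrib)
    finally show ?thesis by (simp add: NL PP_N)
  qed
  also have "\<dots> \<le> (\<Sum>a\<le>L. max (imm N m M (Suc L) a) (Vj N m M (N - Suc L)))"
    by (intro sum_mono) simp
  also have "\<dots> = Vj N m M (N - L)" using Vrec[OF \<open>L < N\<close>] by simp
  finally show ?case .
next
  case (Suc d)
  have L1: "Suc L < N" using Suc by simp
  have ih: "(M + m) * PP N (Suc (Suc L)) \<le> Vj N m M (N - Suc L)"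
    using Suc.hyps(1)[of "Suc L"] Suc.hyps(2) L1 by simp
  have "(M + m) * PP N (Suc L) = real (Suc L) * ((M + m) * PP N (Suc (Suc L)))"
    using PP_Suc[OF L1] by simp
  also have "\<dots> \<le> real (Suc L) * Vj N m M (N - Suc L)"
    using ih by (intro mult_left_mono) auto
  also have "\<dots> \<le> Vj N m M (N - L)" using V4 Suc.prems by blast
  finally show ?case .
qed


lemma main_ge2:
  fixes n :: nat and m M :: real
  assumes "0 \<le> m" and "m < M" and n2: "2 \<le> n"
  shows "\<exists>r s. r \<le> s \<and> s \<le> n \<and>
           (\<forall>S. expected_payoff n m M S \<le> expected_payoff n m M (threshold_strategy r s))"
proof -
  define V where "V L = Vj n m M (n - L)" for L
  have M0: "0 \<le> M" using assms by simp
  define r where "r = (LEAST r. \<forall>L. r < L \<and> L \<le> n \<longrightarrow> V L \<le> PP n L * M)"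
  define s where "s = (LEAST s. \<forall>L. s < L \<and> L \<le> n \<longrightarrow> V L \<le> PP n L * m)"
  have Br: "\<forall>L. r < L \<and> L \<le> n \<longrightarrow> V L \<le> PP n L * M"
    unfolding r_def by (rule LeastI[of _ n]) auto
  have Bs: "\<forall>L. s < L \<and> L \<le> n \<longrightarrow> V L \<le> PP n L * m"
    unfolding s_def by (rule LeastI[of _ n]) auto
  have sn: "s \<le> n" unfolding s_def by (rule Least_le) auto
  have rs: "r \<le> s" unfolding r_def
  proof (rule Least_le, intro allI impI)
    fix L assume "s < L \<and> L \<le> n"
    then have "V L \<le> PP n L * m" using Bs by blast
    also have "\<dots> \<le> PP n L * M" using assms PP_nonneg by (intro mult_left_mono) auto
    finally show "V L \<le> PP n L * M" .
  qed
  have nBr: "\<not> V L \<le> PP n L * M" if "1 \<le> L" "L \<le> r" "L \<le> n" for L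
  proof
    assume h: "V L \<le> PP n L * M"
    have "\<forall>L'. L - 1 < L' \<and> L' \<le> n \<longrightarrow> V L' \<le> PP n L' * M"
    proof (intro allI impI)
      fix L' assume "L - 1 < L' \<and> L' \<le> n"
      then have "L \<le> L'" "L' \<le> n" using that(1) by auto
      then show "V L' \<le> PP n L' * M" using upN[OF M0 that(1) _ _ h[unfolded V_def]] by (simp add: V_def)
    qed
    then have "r \<le> L - 1" unfolding r_def by (rule Least_le)
    then show False using that by simp
  qed
  have nBs: "\<not> V L \<le> PP n L * m" if "1 \<le> L" "L \<le> s" "L \<le> n" for L
  proof
    assume h: "V L \<le> PP n L * m"
    have "\<forall>L'. L - 1 < L' \<and> L' \<le> n \<longrightarrow> V L' \<le> PP n L' * m"
    proof (intro allI impI)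
      fix L' assume "L - 1 < L' \<and> L' \<le> n"
      then have "L \<le> L'" "L' \<le> n" using that(1) by auto
      then show "V L' \<le> PP n L' * m" using upN[OF assms(1) that(1) _ _ h[unfolded V_def]] by (simp add: V_def)
    qed
    then have "s \<le> L - 1" unfolding s_def by (rule Least_le)
    then show False using that by simp
  qed
  have D: "(dec r s L a \<longrightarrow> Vj n m M (n - L) \<le> imm n m M L a) \<and>
        (\<not> dec r s L a \<longrightarrow> imm n m M L a \<le> Vj n m M (n - L))"
    if L: "1 \<le> L" "L \<le> n" "a < L" for L a
  proof -
    have V0: "0 \<le> V L" unfolding V_def using Vj_nonneg assms by simp
    have P0: "0 \<le> PP n L" by (rule PP_nonneg)
    show ?thesis
    proof (cases "L = 1")
      case True
      then have a0: "a = 0" using L by simp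
      have im: "imm n m M L a = PP n 1 * (M + m)" using True a0 by (simp add: imm_def)
      show ?thesis
      proof (cases "r = 0")
        case True
        then have "V 1 \<le> PP n 1 * M" using Br n2 by simp
        also have "\<dots> \<le> PP n 1 * (M + m)" using assms PP_nonneg by (intro mult_left_mono) auto
        finally show ?thesis using \<open>L = 1\<close> a0 True im by (simp add: dec_def V_def)
      next
        case False
        have "imm n m M L a = (M + m) * PP n 2"
          using im PP_Suc[of 1 n] n2 by (simp add: numeral_2_eq_2)
        also have "\<dots> \<le> V 1" using MM[OF n2 assms(1), of M 1] assms n2
          by (simp add: V_def numeral_2_eq_2)
        finally show ?thesis using \<open>L = 1\<close> a0 False by (simp add: dec_def V_def)
      qed
    next
      case False
      then have L2: "2 \<le> L" using L by simp
      show ?thesis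
      proof (cases "a = L - 1")
        case True
        then have an0: "a \<noteq> 0" using L2 by simp
        have im: "imm n m M L a = PP n L * M" using True an0 by (simp add: imm_def)
        show ?thesis using Br nBr[of L] L L2 rs im True
          by (auto simp: dec_def V_def not_le)
      next
        case aL: False
        show ?thesis
        proof (cases "a = 0")
          case True
          have im: "imm n m M L a = PP n L * m" using True aL by (simp add: imm_def)
          have "V L \<le> PP n L * m \<Longrightarrow> V L \<le> PP n L * M"
            using assms P0 by (smt (verit) mult_left_mono)
          then show ?thesis using Bs nBs[of L] nBr[of L] L L2 rs im True aL
            by (auto simp: dec_def V_def not_le)
        next
          case False
          have im: "imm n m M L a = 0" using False aL by (simp add: imm_def)
          then show ?thesis using V0 False aL by (auto simp: dec_def V_def)
        qed
      qed
    qed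
  qed
  have main: "expected_payoff n m M S \<le> expected_payoff n m M (threshold_strategy r s)" for S
  proof -
    have o0: "[] \<in> orders 0" by (simp add: orders_def)
    have "(\<Sum>xs\<in>orders n. payoff n m M S xs) = vl n m M S [] n"
      using sum_orders_Fs[where n=n and f="payoff n m M S"] vl_correct[of "[]" 0 n n S m M] by simp
    also have "\<dots> \<le> Vj n m M n" using vl_le_Vj[OF n2 o0] by simp
    also have "\<dots> = vl n m M (threshold_strategy r s) [] n"
      using vl_thr[OF n2 D o0] by simp
    also have "\<dots> = (\<Sum>xs\<in>orders n. payoff n m M (threshold_strategy r s) xs)"
      using sum_orders_Fs[where n=n and f="payoff n m M (threshold_strategy r s)"]
        vl_correct[of "[]" 0 n n "threshold_strategy r s" m M] by simp
    finally show ?thesis unfolding expected_payoff_def by (intro divide_right_mono) auto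
  qed
  show ?thesis using rs sn main by blast
qed


lemma sum_payoff_vl: "(\<Sum>xs\<in>orders n. payoff n m M S xs) = vl n m M S [] n"
  using sum_orders_Fs[where n=n and f="payoff n m M S"] vl_correct[of "[]" 0 n n S m M] by simp

theorem theorem5:
  fixes n :: nat and m M :: real
  assumes "0 \<le> m" and "m < M"
  shows "\<exists>r s. r \<le> s \<and> s \<le> n \<and>
           (\<forall>S. expected_payoff n m M S \<le> expected_payoff n m M (threshold_strategy r s))"
proof -
  consider "n = 0" | "n = 1" | "2 \<le> n" by linarith
  then show ?thesis
  proof cases
    case 1
    then show ?thesis unfolding expected_payoff_def sum_payoff_vl by simp
  next
    case 2
    have v: "vl 1 m M S [] 1 = (if S (obs [0] 1) then M else 0)" for S
      by (simp add: extd_def gv_def)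
    have t: "threshold_strategy 0 0 (obs [0] 1)"
      by (simp add: obs_def threshold_strategy_def)
    have "expected_payoff n m M S \<le> expected_payoff n m M (threshold_strategy 0 0)" for S
      unfolding expected_payoff_def sum_payoff_vl 2 v using t assms
      by (intro divide_right_mono) auto
    then show ?thesis by blast
  next
    case 3
    then show ?thesis using main_ge2 assms by blast
  qed
qed

end
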